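(* Assume the standing conventions of the context and suppose $\mathcal D_{Z,Z'}\neq\emptyset$. Let $\Lambda\in\overline{\mathcal S}_Z$ and $\Lambda'\in\overline{\mathcal S}_{Z'}$. (i) If $\Psi'$ is a consecutive pair in $Z'_{\mathrm I}$ with $(Z,\Lambda_{\Psi'})\in\mathcal D_{Z,Z'}$, then $(\Lambda,\Lambda')\in\overline{\mathcal B}^+_{Z,Z'}$ if and only if $(\Lambda,\Lambda'+\Lambda_{\Psi'})\in\overline{\mathcal B}^+_{Z,Z'}$. (ii) If $\Psi$ is a consecutive pair in $Z_{\mathrm I}$ with $(\Lambda_\Psi,Z')\in\mathcal D_{Z,Z'}$, then $(\Lambda,\Lambda')\in\overline{\mathcal B}^+_{Z,Z'}$ if and only if $(\Lambda+\Lambda_{\Psi},\Lambda')\in\overline{\mathcal B}^+_{Z,Z'}$.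
   Context: A symbol is an array $\Lambda=\binom{a'_1,\ldots,a'_{m_1}}{b'_1,\ldots,b'_{m_2}}$ of two strictly decreasing finite sequences of nonnegative integers (top row, bottom row); its defect is $\mathrm{def}(\Lambda)=m_1-m_2$. Standing assumptions: $Z=\binom{a_1,\ldots,a_{m+1}}{b_1,\ldots,b_m}$ is a special symbol of defect $1$, i.e. $a_1\ge b_1\ge a_2\ge b_2\ge\cdots\ge b_m\ge a_{m+1}$; $Z'=\binom{c_1,\ldots,c_{m'}}{d_1,\ldots,d_{m'}}$ is a special symbol of defect $0$, i.e. $c_1\ge d_1\ge c_2\ge d_2\ge\cdots\ge c_{m'}\ge d_{m'}$; and $m'\in\{m,m+1\}$. For a symbol $Y$, $Y_{\mathrm I}$ is the set of entries of $Y$ occurring in exactly one row. For $M\subset Z_{\mathrm I}$, $\Lambda_M$ is the symbol obtained from $Z$ by moving every entry of $M$ to the other row (rows re-sorted decreasingly); for $N\subset Z'_{\mathrm I}$, $\Lambda_N$ is obtained from $Z'$ in the same way. $\overline{\mathcal S}_Z=\{\Lambda_M: M\subset Z_{\mathrm I}\}$, $\overline{\mathcal S}_{Z'}=\{\Lambda_N:N\subset Z'_{\mathrm I}\}$; $\mathcal S_{Z,1}$ (resp. $\mathcal S_{Z',0}$) is the set of elements of $\overline{\mathcal S}_Z$ of defect $1$ (resp. of $\overline{\mathcal S}_{Z'}$ of defect $0$). Sum: $\Lambda_{M_1}+\Lambda_{M_2}:=\Lambda_{(M_1\cup M_2)\smallsetminus(M_1\cap M_2)}$ (for subsets of $Z_{\mathrm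 I}$, and likewise of $Z'_{\mathrm I}$). A consecutive pair in $Z'_{\mathrm I}$ is a two-element subset $\{c_k,d_l\}\subset Z'_{\mathrm I}$, written $\binom{c_k}{d_l}$, with $l\in\{k-1,k\}$; a consecutive pair in $Z_{\mathrm I}$ is $\{a_k,b_l\}\subset Z_{\mathrm I}$, written $\binom{a_k}{b_l}$, with $l\in\{k-1,k\}$. Relation $\overline{\mathcal B}^+_{Z,Z'}\subset\overline{\mathcal S}_Z\times\overline{\mathcal S}_{Z'}$: for $\Lambda=\binom{a'_1,\ldots,a'_{m_1}}{b'_1,\ldots,b'_{m_2}}\in\overline{\mathcal S}_Z$ and $\Lambda'=\binom{c'_1,\ldots,c'_{m'_1}}{d'_1,\ldots,d'_{m'_2}}\in\overline{\mathcal S}_{Z'}$, $(\Lambda,\Lambda')\in\overline{\mathcal B}^+_{Z,Z'}$ iff $\mathrm{def}(\Lambda')=1-\mathrm{def}(\Lambda)$ and: if $m'=m$, $a'_i>d'_i\ge a'_{i+1}$ for $1\le i\le m'_2$ and $b'_{i-1}>c'_i\ge b'_i$ for $1\le i\le m'_1$; if $m'=m+1$, $a'_i\ge d'_i>a'_{i+1}$ for $1\le i\le m'_2$ and $b'_{i-1}\ge c'_i>b'_i$ for $1\le i\le m'_1$; here $b'_0=+\infty$ and nonexistent entries $a'_j,b'_j$ beyond the row lengths are $-\infty$. Then $\mathcal D_{Z,Z'}=\overline{\mathcal B}^+_{Z,Z'}\cap(\mathcal S_{Z,1}\times\mathcal S_{Z',0})$. *)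

theory Defs
  imports Main "HOL-Library.Extended_Real"
begin

text \<open>A symbol is a pair (top row, bottom row) of strictly decreasing lists of
naturals. Indices are 0-based (entry a'_{i+1} of the paper is top ! i).\<close>

type_synonym symbol = "nat list \<times> nat list"

definition strict_decr :: "nat list \<Rightarrow> bool" where
  "strict_decr xs \<longleftrightarrow> sorted_wrt (>) xs"

definition is_symbol :: "symbol \<Rightarrow> bool" where
  "is_symbol L \<longleftrightarrow> strict_decr (fst L) \<and> strict_decr (snd L)"

definition defect :: "symbol \<Rightarrow> int" where
  "defect L = int (length (fst L)) - int (length (snd L))"

definition sym_I :: "symbol \<Rightarrow> nat set" where
  "sym_I Y = (set (fst Y) - set (snd Y)) \<union> (set (snd Y) - set (fst Y))"

definition decr_list :: "nat set \<Rightarrow> nat list" where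
  "decr_list S = rev (sorted_list_of_set S)"

definition lam :: "symbol \<Rightarrow> nat set \<Rightarrow> symbol" where
  "lam Y M = (decr_list ((set (fst Y) - M) \<union> (set (snd Y) \<inter> M)),
              decr_list ((set (snd Y) - M) \<union> (set (fst Y) \<inter> M)))"

definition Sbar :: "symbol \<Rightarrow> symbol set" where
  "Sbar Y = {lam Y M | M. M \<subseteq> sym_I Y}"

definition S_def_set :: "symbol \<Rightarrow> int \<Rightarrow> symbol set" where
  "S_def_set Y d = {L \<in> Sbar Y. defect L = d}"

definition special_def1 :: "symbol \<Rightarrow> bool" where
  "special_def1 Z \<longleftrightarrow> is_symbol Z \<and> length (fst Z) = length (snd Z) + 1 \<and>
     (\<forall>i < length (snd Z). fst Z ! i \<ge> snd Z ! i \<and> snd Z ! i \<ge> fst Z ! (i+1))"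

definition special_def0 :: "symbol \<Rightarrow> bool" where
  "special_def0 Z \<longleftrightarrow> is_symbol Z \<and> length (fst Z) = length (snd Z) \<and>
     (\<forall>i < length (snd Z). fst Z ! i \<ge> snd Z ! i \<and>
        (i + 1 < length (fst Z) \<longrightarrow> snd Z ! i \<ge> fst Z ! (i+1)))"

definition ent :: "nat list \<Rightarrow> nat \<Rightarrow> ereal" where
  "ent xs i = (if i < length xs then ereal (real (xs ! i)) else -\<infinity>)"

text \<open>b'_{i-1} in 0-based form: previous entry, +infinity for the first one.\<close>
definition ent_prev :: "nat list \<Rightarrow> nat \<Rightarrow> ereal" where
  "ent_prev xs i = (if i = 0 then \<infinity> else ent xs (i - 1))"

text \<open>The relation B^+_{Z,Z'} (bar). Here m = length of bottom row of Z,
  m' = length of top row of Z'.\<close>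
definition Bplus :: "symbol \<Rightarrow> symbol \<Rightarrow> symbol \<Rightarrow> symbol \<Rightarrow> bool" where
  "Bplus Z Z' L L' \<longleftrightarrow>
     L \<in> Sbar Z \<and> L' \<in> Sbar Z' \<and> defect L' = 1 - defect L \<and>
     (let a = fst L; b = snd L; c = fst L'; d = snd L' in
      (if length (fst Z') = length (snd Z) then
         (\<forall>i < length d. ent a i > ent d i \<and> ent d i \<ge> ent a (i+1)) \<and>
         (\<forall>i < length c. ent_prev b i > ent c i \<and> ent c i \<ge> ent b i)
       else
         (\<forall>i < length d. ent a i \<ge> ent d i \<and> ent d i > ent a (i+1)) \<and>
         (\<forall>i < length c. ent_prev b i \<ge> ent c i \<and> ent c i > ent b i)))"

definition Dset :: "symbol \<Rightarrow> symbol \<Rightarrow> (symbol \<times> symbol) set" where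
  "Dset Z Z' = {(L, L'). Bplus Z Z' L L' \<and> L \<in> S_def_set Z 1 \<and> L' \<in> S_def_set Z' 0}"

text \<open>Consecutive pair {c_k, d_l} in Y_I with l in {k-1, k} (0-based: l = k or l + 1 = k).
  Applies to both Z (top a, bottom b) and Z' (top c, bottom d).\<close>
definition consec_pair :: "symbol \<Rightarrow> nat set \<Rightarrow> bool" where
  "consec_pair Y P \<longleftrightarrow> (\<exists>k l. k < length (fst Y) \<and> l < length (snd Y) \<and>
      (l = k \<or> l + 1 = k) \<and> P = {fst Y ! k, snd Y ! l} \<and> P \<subseteq> sym_I Y \<and> card P = 2)"

end

theory Submission imports Defs begin

lemma strict_decr_nth: "strict_decr xs \<Longrightarrow> i < j \<Longrightarrow> j < length xs \<Longrightarrow> xs!j < xs!i"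
  unfolding strict_decr_def by (simp add: sorted_wrt_iff_nth_less)

lemma strict_decr_nth_le: "strict_decr xs \<Longrightarrow> i \<le> j \<Longrightarrow> j < length xs \<Longrightarrow> xs!j \<le> xs!i"
  by (metis le_eq_less_or_eq strict_decr_nth order.strict_implies_order)

lemma strict_decr_distinct: "strict_decr xs \<Longrightarrow> distinct xs"
  unfolding distinct_conv_nth
  by (metis linorder_neqE_nat strict_decr_nth less_irrefl)

lemma card_filter_nth:
  assumes "distinct xs"
  shows "card {v\<in>set xs. P v} = card {k. k < length xs \<and> P (xs!k)}"
proof -
  have "{v\<in>set xs. P v} = nth xs ` {k. k < length xs \<and> P (xs!k)}"
    by (auto simp: in_set_conv_nth)
  moreover have "inj_on (nth xs) {k. k < length xs \<and> P (xs!k)}"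
    using assms by (auto simp: inj_on_def nth_eq_iff_index_eq)
  ultimately show ?thesis by (simp add: card_image)
qed

definition upc :: "(nat \<Rightarrow> bool) \<Rightarrow> bool" where
  "upc P \<longleftrightarrow> (\<forall>v w. P v \<longrightarrow> v \<le> w \<longrightarrow> P w)"

lemma tw_iff:
  assumes "strict_decr xs" "upc P" "k < length xs"
  shows "P (xs!k) \<longleftrightarrow> k < length (takeWhile P xs)"
proof
  assume "k < length (takeWhile P xs)" then show "P (xs!k)"
    by (metis nth_mem set_takeWhileD takeWhile_nth)
next
  assume p: "P (xs!k)"
  show "k < length (takeWhile P xs)"
  proof (rule ccontr)
    assume "\<not> ?thesis"
    hence t: "length (takeWhile P xs) \<le> k" by simp
    hence "length (takeWhile P xs) < length xs" using assms(3) by simp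
    hence np: "\<not> P (xs ! length (takeWhile P xs))" by (rule nth_length_takeWhile)
    have "xs!k \<le> xs ! length (takeWhile P xs)" using strict_decr_nth_le[OF assms(1) t assms(3)] .
    with p assms(2) np show False unfolding upc_def by blast
  qed
qed

lemma card_upc:
  assumes "strict_decr xs" "upc P"
  shows "card {v\<in>set xs. P v} = length (takeWhile P xs)"
proof -
  have "{k. k < length xs \<and> P (xs!k)} = {..<length (takeWhile P xs)}"
    using tw_iff[OF assms] length_takeWhile_le[of P xs] by fastforce
  then show ?thesis using card_filter_nth[OF strict_decr_distinct[OF assms(1)]] by simp
qed

lemma card_upc_eq:
  assumes "strict_decr xs" "upc P"
  shows "card {v\<in>set xs. P v} = n \<longleftrightarrow>
     ((n = 0 \<or> (n - 1 < length xs \<and> P (xs!(n-1)))) \<and> (n < length xs \<longrightarrow> \<not> P (xs!n)))"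
proof -
  let ?t = "length (takeWhile P xs)"
  have le: "?t \<le> length xs" by (rule length_takeWhile_le)
  have iff: "\<And>k. k < length xs \<Longrightarrow> P (xs!k) \<longleftrightarrow> k < ?t" using tw_iff[OF assms] by blast
  show ?thesis unfolding card_upc[OF assms]
  proof
    assume "?t = n" then show "((n = 0 \<or> (n - 1 < length xs \<and> P (xs!(n-1)))) \<and> (n < length xs \<longrightarrow> \<not> P (xs!n)))"
    proof -
      assume t: "?t = n"
      have "n = 0 \<or> (n - 1 < length xs \<and> P (xs!(n-1)))"
      proof (cases n)
        case (Suc k) then have "k < ?t" "k < length xs" using t le by auto
        then show ?thesis using iff Suc by simp
      qed simp
      moreover have "n < length xs \<longrightarrow> \<not> P (xs!n)" using iff t by simp
      ultimately show ?thesis by blast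
    qed
  next
    assume h: "((n = 0 \<or> (n - 1 < length xs \<and> P (xs!(n-1)))) \<and> (n < length xs \<longrightarrow> \<not> P (xs!n)))"
    show "?t = n"
    proof (rule ccontr)
      assume "?t \<noteq> n"
      then consider "n < ?t" | "?t < n" by linarith
      then show False
      proof cases
        case 1 then show False using h iff le by auto
      next
        case 2 then have "n - 1 < length xs \<and> P (xs!(n-1))" using h by auto
        then have "n - 1 < ?t" using iff by blast
        with 2 show False by linarith
      qed
    qed
  qed
qed

lemma decr_list_props:
  assumes "finite S"
  shows "set (decr_list S) = S" "strict_decr (decr_list S)" "length (decr_list S) = card S"
  using assms by (auto simp: decr_list_def strict_decr_def sorted_wrt_rev
      intro: sorted_wrt_mono_rel[OF _ strict_sorted_list_of_set])

lemma lam_sets: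
  "set (fst (lam Y M)) = (set (fst Y) - M) \<union> (set (snd Y) \<inter> M)"
  "set (snd (lam Y M)) = (set (snd Y) - M) \<union> (set (fst Y) \<inter> M)"
  "strict_decr (fst (lam Y M))" "strict_decr (snd (lam Y M))"
  "length (fst (lam Y M)) = card ((set (fst Y) - M) \<union> (set (snd Y) \<inter> M))"
  "length (snd (lam Y M)) = card ((set (snd Y) - M) \<union> (set (fst Y) \<inter> M))"
  by (simp_all add: lam_def decr_list_props)

lemma rank_ge:
  assumes "strict_decr xs" "i < length xs"
  shows "card {v\<in>set xs. xs!i \<le> v} = Suc i"
proof -
  have u: "upc (\<lambda>v. xs!i \<le> v)" by (auto simp: upc_def)
  show ?thesis unfolding card_upc_eq[OF assms(1) u]
    using assms strict_decr_nth[OF assms(1), of i "Suc i"] by auto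
qed

lemma rank_gt:
  assumes "strict_decr xs" "i < length xs"
  shows "card {v\<in>set xs. xs!i < v} = i"
proof -
  have u: "upc (\<lambda>v. xs!i < v)" by (auto simp: upc_def)
  show ?thesis unfolding card_upc_eq[OF assms(1) u]
    using assms strict_decr_nth[OF assms(1), of "i - 1" i] by auto
qed

lemma condD1:
  assumes "strict_decr a"
  shows "(ent a i > ereal (real x) \<and> ereal (real x) \<ge> ent a (i+1)) \<longleftrightarrow> card {v\<in>set a. x < v} = Suc i"
proof -
  have u: "upc (\<lambda>v. x < v)" by (auto simp: upc_def)
  show ?thesis unfolding card_upc_eq[OF assms u] by (auto simp: ent_def)
qed

lemma condD2:
  assumes "strict_decr a"
  shows "(ent a i \<ge> ereal (real x) \<and> ereal (real x) > ent a (i+1)) \<longleftrightarrow> card {v\<in>set a. x \<le> v} = Suc i"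
proof -
  have u: "upc (\<lambda>v. x \<le> v)" by (auto simp: upc_def)
  show ?thesis unfolding card_upc_eq[OF assms u] by (auto simp: ent_def)
qed

lemma condC1:
  assumes "strict_decr b"
  shows "(ent_prev b i > ereal (real x) \<and> ereal (real x) \<ge> ent b i) \<longleftrightarrow> card {v\<in>set b. x < v} = i"
proof -
  have u: "upc (\<lambda>v. x < v)" by (auto simp: upc_def)
  show ?thesis unfolding card_upc_eq[OF assms u] by (cases i) (auto simp: ent_def ent_prev_def)
qed

lemma condC2:
  assumes "strict_decr b"
  shows "(ent_prev b i \<ge> ereal (real x) \<and> ereal (real x) > ent b i) \<longleftrightarrow> card {v\<in>set b. x \<le> v} = i"
proof -
  have u: "upc (\<lambda>v. x \<le> v)" by (auto simp: upc_def)
  show ?thesis unfolding card_upc_eq[OF assms u] by (cases i) (auto simp: ent_def ent_prev_def)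
qed

definition Rel :: "(nat \<Rightarrow> nat \<Rightarrow> bool) \<Rightarrow> nat set \<Rightarrow> nat set \<Rightarrow> nat set \<Rightarrow> nat set \<Rightarrow> bool" where
  "Rel R A B C D \<longleftrightarrow> (\<forall>x\<in>D. card {v\<in>A. R x v} = card {v\<in>D. x \<le> v}) \<and>
                      (\<forall>x\<in>C. card {v\<in>B. R x v} = card {v\<in>C. x < v})"

lemma allD_conv:
  assumes "strict_decr d"
  shows "(\<forall>i<length d. Q i (d!i) (Suc i)) \<longleftrightarrow> (\<forall>x\<in>set d. Q (card {v\<in>set d. x < v}) x (card {v\<in>set d. x \<le> v}))"
proof
  assume h: "\<forall>i<length d. Q i (d!i) (Suc i)"
  show "\<forall>x\<in>set d. Q (card {v\<in>set d. x < v}) x (card {v\<in>set d. x \<le> v})"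
  proof
    fix x assume "x \<in> set d"
    then obtain i where i: "i < length d" "x = d!i" by (auto simp: in_set_conv_nth)
    then show "Q (card {v\<in>set d. x < v}) x (card {v\<in>set d. x \<le> v})"
      using h rank_ge[OF assms i(1)] rank_gt[OF assms i(1)] by simp
  qed
next
  assume h: "\<forall>x\<in>set d. Q (card {v\<in>set d. x < v}) x (card {v\<in>set d. x \<le> v})"
  show "\<forall>i<length d. Q i (d!i) (Suc i)"
  proof (intro allI impI)
    fix i assume i: "i < length d"
    then have "d!i \<in> set d" by simp
    then show "Q i (d!i) (Suc i)" using h rank_ge[OF assms i] rank_gt[OF assms i] by force
  qed
qed

lemma Rel_conv:
  assumes "strict_decr a" "strict_decr b" "strict_decr c" "strict_decr d"
  shows "((\<forall>i < length d. ent a i > ent d i \<and> ent d i \<ge> ent a (i+1)) \<and>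
         (\<forall>i < length c. ent_prev b i > ent c i \<and> ent c i \<ge> ent b i))
       \<longleftrightarrow> Rel (<) (set a) (set b) (set c) (set d)"
    "((\<forall>i < length d. ent a i \<ge> ent d i \<and> ent d i > ent a (i+1)) \<and>
         (\<forall>i < length c. ent_prev b i \<ge> ent c i \<and> ent c i > ent b i))
       \<longleftrightarrow> Rel (\<le>) (set a) (set b) (set c) (set d)"
proof -
  have ed: "\<And>i. i < length d \<Longrightarrow> ent d i = ereal (real (d!i))" by (simp add: ent_def)
  have ec: "\<And>i. i < length c \<Longrightarrow> ent c i = ereal (real (c!i))" by (simp add: ent_def)
  have 1: "(\<forall>i < length d. ent a i > ent d i \<and> ent d i \<ge> ent a (i+1)) \<longleftrightarrow>
           (\<forall>x\<in>set d. card {v\<in>set a. x < v} = card {v\<in>set d. x \<le> v})"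
    using allD_conv[OF assms(4), of "\<lambda>_ x n. card {v\<in>set a. x < v} = n"] ed condD1[OF assms(1)] by simp
  have 2: "(\<forall>i < length c. ent_prev b i > ent c i \<and> ent c i \<ge> ent b i) \<longleftrightarrow>
           (\<forall>x\<in>set c. card {v\<in>set b. x < v} = card {v\<in>set c. x < v})"
    using allD_conv[OF assms(3), of "\<lambda>i x _. card {v\<in>set b. x < v} = i"] ec condC1[OF assms(2)] by simp
  have 3: "(\<forall>i < length d. ent a i \<ge> ent d i \<and> ent d i > ent a (i+1)) \<longleftrightarrow>
           (\<forall>x\<in>set d. card {v\<in>set a. x \<le> v} = card {v\<in>set d. x \<le> v})"
    using allD_conv[OF assms(4), of "\<lambda>_ x n. card {v\<in>set a. x \<le> v} = n"] ed condD2[OF assms(1)] by simp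
  have 4: "(\<forall>i < length c. ent_prev b i \<ge> ent c i \<and> ent c i > ent b i) \<longleftrightarrow>
           (\<forall>x\<in>set c. card {v\<in>set b. x \<le> v} = card {v\<in>set c. x < v})"
    using allD_conv[OF assms(3), of "\<lambda>i x _. card {v\<in>set b. x \<le> v} = i"] ec condC2[OF assms(2)] by simp
  show "((\<forall>i < length d. ent a i > ent d i \<and> ent d i \<ge> ent a (i+1)) \<and>
         (\<forall>i < length c. ent_prev b i > ent c i \<and> ent c i \<ge> ent b i))
       \<longleftrightarrow> Rel (<) (set a) (set b) (set c) (set d)" using 1 2 by (simp add: Rel_def)
  show "((\<forall>i < length d. ent a i \<ge> ent d i \<and> ent d i > ent a (i+1)) \<and>
         (\<forall>i < length c. ent_prev b i \<ge> ent c i \<and> ent c i > ent b i))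
       \<longleftrightarrow> Rel (\<le>) (set a) (set b) (set c) (set d)" using 3 4 by (simp add: Rel_def)
qed

definition interl :: "nat list \<Rightarrow> nat list \<Rightarrow> bool" where
  "interl t b \<longleftrightarrow> strict_decr t \<and> strict_decr b \<and> length b \<le> length t \<and> length t \<le> Suc (length b) \<and>
     (\<forall>i<length b. b!i \<le> t!i) \<and> (\<forall>i. Suc i < length t \<longrightarrow> t!(Suc i) \<le> b!i)"

lemma special1_interl: "special_def1 Z \<Longrightarrow> interl (fst Z) (snd Z)"
  unfolding special_def1_def interl_def is_symbol_def by auto

lemma special0_interl: "special_def0 Z \<Longrightarrow> interl (fst Z) (snd Z)"
  unfolding special_def0_def interl_def is_symbol_def by auto

lemma SL:
  assumes "interl t b" "upc P"
  shows "card {v\<in>set b. P v} \<le> card {v\<in>set t. P v}"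
        "card {v\<in>set t. P v} \<le> Suc (card {v\<in>set b. P v})"
proof -
  have dt: "distinct t" and db: "distinct b"
    using assms(1) strict_decr_distinct by (auto simp: interl_def)
  let ?It = "{k. k < length t \<and> P (t!k)}" and ?Ib = "{k. k < length b \<and> P (b!k)}"
  have "?Ib \<subseteq> ?It" using assms unfolding interl_def upc_def by auto
  then show "card {v\<in>set b. P v} \<le> card {v\<in>set t. P v}"
    unfolding card_filter_nth[OF dt] card_filter_nth[OF db] by (intro card_mono) auto
  have "?It \<subseteq> insert 0 (Suc ` ?Ib)"
  proof
    fix k assume k: "k \<in> ?It"
    show "k \<in> insert 0 (Suc ` ?Ib)"
    proof (cases k)
      case (Suc j)
      with k assms have "j < length b" "P (b!j)" unfolding interl_def upc_def by auto
      then show ?thesis using Suc by auto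
    qed simp
  qed
  then have "card ?It \<le> card (insert 0 (Suc ` ?Ib))" by (intro card_mono) auto
  also have "\<dots> \<le> Suc (card (Suc ` ?Ib))" by (simp add: card_insert_le_m1)
  also have "\<dots> = Suc (card ?Ib)" by (simp add: card_image)
  finally show "card {v\<in>set t. P v} \<le> Suc (card {v\<in>set b. P v})"
    unfolding card_filter_nth[OF dt] card_filter_nth[OF db] .
qed

lemma ADJ:
  assumes "interl t b" "k < length t" "l < length b" "l = k \<or> Suc l = k"
    and "v \<in> set t \<union> set b"
  shows "\<not> (min (t!k) (b!l) < v \<and> v < max (t!k) (b!l))"
proof -
  have st: "strict_decr t" and sb: "strict_decr b" and I1: "\<forall>i<length b. b!i \<le> t!i"
    and I2: "\<forall>i. Suc i < length t \<longrightarrow> t!(Suc i) \<le> b!i" and lens: "length t \<le> Suc (length b)"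
    using assms(1) by (auto simp: interl_def)
  have mt: "\<And>i j. i \<le> j \<Longrightarrow> j < length t \<Longrightarrow> t!j \<le> t!i" using strict_decr_nth_le[OF st] by blast
  have mb: "\<And>i j. i \<le> j \<Longrightarrow> j < length b \<Longrightarrow> b!j \<le> b!i" using strict_decr_nth_le[OF sb] by blast
  from assms(5) obtain i where "(i < length t \<and> v = t!i) \<or> (i < length b \<and> v = b!i)"
    by (auto simp: in_set_conv_nth)
  then consider (T) "i < length t" "v = t!i" | (B) "i < length b" "v = b!i" by blast
  then show ?thesis
  proof cases
    case T
    show ?thesis
    proof (cases "i \<le> k")
      case True
      then have "t!k \<le> v" using mt T assms(2) by simp
      moreover have "i \<le> l \<Longrightarrow> b!l \<le> v" using I1 mb T assms(3) by (metis le_less_trans order_trans)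
      moreover have "\<not> i \<le> l \<Longrightarrow> i = k" using assms(4) True by auto
      ultimately show ?thesis using assms(4) True T by (cases "i \<le> l") auto
    next
      case False
      then have "v \<le> t!k" using mt T assms(2) by simp
      moreover have "v \<le> b!l"
      proof -
        have "t!i \<le> b!(i-1)" using I2 T False by (metis Suc_pred' gr0I not_less0 not_le)
        moreover have "b!(i-1) \<le> b!l" using mb assms(4) False T lens by (intro mb) auto
        ultimately show ?thesis using T by simp
      qed
      ultimately show ?thesis by auto
    qed
  next
    case B
    show ?thesis
    proof (cases "i < k")
      case True
      have "t!k \<le> v"
      proof -
        have "t!(Suc i) \<le> b!i" using I2 True assms(2) by auto
        moreover have "t!k \<le> t!(Suc i)" using mt True assms(2) by simp
        ultimately show ?thesis using B by simp
      qed
      moreover have "i \<le> l \<Longrightarrow> b!l \<le> v" using mb B assms(3) by simp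
      ultimately show ?thesis using assms(4) True by (cases "i \<le> l") auto
    next
      case False
      then have "v \<le> b!l" using mb B assms(4) by auto
      moreover have "v \<le> t!k"
      proof -
        have "b!i \<le> t!i" using I1 B by simp
        moreover have "i < length t" using B assms(1) by (auto simp: interl_def)
        then have "t!i \<le> t!k" using mt False by simp
        ultimately show ?thesis using B by simp
      qed
      ultimately show ?thesis by auto
    qed
  qed
qed

lemma Sbar_strict: "L \<in> Sbar Y \<Longrightarrow> strict_decr (fst L) \<and> strict_decr (snd L)"
proof -
  assume "L \<in> Sbar Y"
  then obtain M where "L = lam Y M" unfolding Sbar_def by blast
  then show ?thesis using lam_sets(3,4) by simp
qed

lemma Bplus_iff:
  assumes "L \<in> Sbar Z" "L' \<in> Sbar Z'"
  shows "Bplus Z Z' L L' \<longleftrightarrow> defect L' = 1 - defect L \<and>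
     Rel (if length (fst Z') = length (snd Z) then (<) else (\<le>))
        (set (fst L)) (set (snd L)) (set (fst L')) (set (snd L'))"
proof -
  have s: "strict_decr (fst L)" "strict_decr (snd L)" "strict_decr (fst L')" "strict_decr (snd L')"
    using Sbar_strict assms by auto
  show ?thesis
  proof (cases "length (fst Z') = length (snd Z)")
    case True
    then show ?thesis unfolding Bplus_def Let_def using assms by (simp only: Rel_conv(1)[OF s, symmetric] if_True simp_thms)
  next
    case False
    then show ?thesis unfolding Bplus_def Let_def using assms by (simp only: Rel_conv(2)[OF s, symmetric] if_False simp_thms)
  qed
qed

lemma rank_exists_gt:
  fixes S :: "nat set"
  assumes "finite S" "k < card S"
  shows "\<exists>c\<in>S. card {v\<in>S. c < v} = k"
proof -
  have p: "set (decr_list S) = S" "strict_decr (decr_list S)" "length (decr_list S) = card S"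
    using decr_list_props[OF assms(1)] by auto
  have "card {v\<in>set (decr_list S). decr_list S ! k < v} = k"
    using rank_gt[OF p(2)] p(3) assms(2) by simp
  moreover have "decr_list S ! k \<in> S" using p assms(2) nth_mem[of k "decr_list S"] by simp
  ultimately show ?thesis using p(1) by (intro bexI[of _ "decr_list S ! k"]) simp_all
qed

lemma rank_exists_ge:
  fixes S :: "nat set"
  assumes "finite S" "k < card S"
  shows "\<exists>c\<in>S. card {v\<in>S. c \<le> v} = Suc k"
proof -
  have p: "set (decr_list S) = S" "strict_decr (decr_list S)" "length (decr_list S) = card S"
    using decr_list_props[OF assms(1)] by auto
  have "card {v\<in>set (decr_list S). decr_list S ! k \<le> v} = Suc k"
    using rank_ge[OF p(2)] p(3) assms(2) by simp
  moreover have "decr_list S ! k \<in> S" using p assms(2) nth_mem[of k "decr_list S"] by simp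
  ultimately show ?thesis using p(1) by (intro bexI[of _ "decr_list S ! k"]) simp_all
qed

lemma lam_toggle_sets:
  assumes "M \<subseteq> sym_I Y" "P \<subseteq> sym_I Y"
  shows "set (fst (lam Y ((M \<union> P) - (M \<inter> P)))) = (set (fst (lam Y M)) - P) \<union> (set (snd (lam Y M)) \<inter> P)"
        "set (snd (lam Y ((M \<union> P) - (M \<inter> P)))) = (set (snd (lam Y M)) - P) \<union> (set (fst (lam Y M)) \<inter> P)"
  using assms unfolding lam_sets sym_I_def by blast+

lemma lam_union: "set (fst (lam Y M)) \<union> set (snd (lam Y M)) = set (fst Y) \<union> set (snd Y)"
  unfolding lam_sets by blast

lemma lam_symI: "M \<subseteq> sym_I Y \<Longrightarrow> v \<in> sym_I Y \<Longrightarrow> v \<notin> set (fst (lam Y M)) \<inter> set (snd (lam Y M))"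
  unfolding lam_sets sym_I_def by blast

lemma lam_card:
  assumes "M \<subseteq> sym_I Y"
  shows "card (set (fst (lam Y M))) + card (set (snd (lam Y M))) = card (set (fst Y)) + card (set (snd Y))"
proof -
  let ?T = "set (fst Y)" and ?B = "set (snd Y)"
  have d1: "(?T - M) \<inter> (?B \<inter> M) = {}" "(?B - M) \<inter> (?T \<inter> M) = {}"
    using assms unfolding sym_I_def by blast+
  have "card ((?T - M) \<union> (?B \<inter> M)) = card (?T - M) + card (?B \<inter> M)"
    using d1 by (simp add: card_Un_disjoint)
  moreover have "card ((?B - M) \<union> (?T \<inter> M)) = card (?B - M) + card (?T \<inter> M)"
    using d1 by (simp add: card_Un_disjoint)
  moreover have "card ?T = card (?T - M) + card (?T \<inter> M)"
    using card_Int_Diff[of ?T M] by simp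
  moreover have "card ?B = card (?B - M) + card (?B \<inter> M)"
    using card_Int_Diff[of ?B M] by simp
  ultimately show ?thesis unfolding lam_sets by simp
qed

lemma lam_defect: "defect (lam Y M) = int (card (set (fst (lam Y M)))) - int (card (set (snd (lam Y M))))"
  unfolding defect_def using lam_sets(3,4) strict_decr_distinct by (simp add: distinct_card)

lemma lam_in_Sbar: "M \<subseteq> sym_I Y \<Longrightarrow> lam Y M \<in> Sbar Y"
  unfolding Sbar_def by blast

definition swp :: "nat \<Rightarrow> nat \<Rightarrow> nat \<Rightarrow> nat" where
  "swp x y v = (if v = x then y else if v = y then x else v)"

lemma swp_inv[simp]: "swp x y (swp x y v) = v"
  unfolding swp_def by auto

lemma swp_inj: "inj_on (swp x y) S"
  by (metis inj_on_inverseI swp_inv)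

lemma swp_image_mem: "v \<in> swp x y ` S \<longleftrightarrow> swp x y v \<in> S"
  by (metis image_iff swp_inv)

lemma tog_image:
  assumes "(x \<in> C \<and> x \<notin> D \<and> y \<in> D \<and> y \<notin> C) \<or> (x \<in> D \<and> x \<notin> C \<and> y \<in> C \<and> y \<notin> D)" "x \<noteq> y"
  shows "(C - {x,y}) \<union> (D \<inter> {x,y}) = swp x y ` C"
proof (rule set_eqI)
  fix v show "v \<in> (C - {x,y}) \<union> (D \<inter> {x,y}) \<longleftrightarrow> v \<in> swp x y ` C"
    unfolding swp_image_mem using assms unfolding swp_def by auto
qed

lemma card_swp_filter:
  "card {v \<in> swp x y ` S. Q v} = card {u\<in>S. Q (swp x y u)}"
proof -
  have "{v \<in> swp x y ` S. Q v} = swp x y ` {u\<in>S. Q (swp x y u)}" by auto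
  then show ?thesis by (simp add: card_image swp_inj)
qed

lemma nb_lem: "\<forall>v\<in>S. \<not>(y<v \<and> v<x) \<Longrightarrow> v \<in> S \<Longrightarrow> v \<le> y \<or> x \<le> (v::nat)"
proof -
  assume "\<forall>v\<in>S. \<not>(y<v \<and> v<x)" "v \<in> S"
  then have "\<not>(y<v \<and> v<x)" by blast
  then show ?thesis by linarith
qed

lemma T1dir:
  assumes fin: "finite A" "finite B" "finite C" "finite D"
  and xy: "y < x" "x \<in> C \<union> D" "y \<in> C \<union> D" "x \<notin> C \<inter> D" "y \<notin> C \<inter> D"
  and nb: "\<forall>v\<in>C\<union>D. \<not>(y<v \<and> v<x)"
  and eqR: "\<forall>v\<in>A\<union>B. R x v \<longleftrightarrow> R y v"
  and rel: "Rel R A B C D"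
  shows "Rel R A B ((C - {x,y}) \<union> (D \<inter> {x,y})) ((D - {x,y}) \<union> (C \<inter> {x,y})) \<and>
         card ((C - {x,y}) \<union> (D \<inter> {x,y})) = card C \<and> card ((D - {x,y}) \<union> (C \<inter> {x,y})) = card D"
proof -
  have cA: "{v\<in>A. R x v} = {v\<in>A. R y v}" "{v\<in>B. R x v} = {v\<in>B. R y v}" using eqR by auto
  have notDD: "\<not>(x\<in>D \<and> y\<in>D)"
  proof
    assume h: "x\<in>D \<and> y\<in>D"
    have "{v\<in>D. y \<le> v} = insert y {v\<in>D. x \<le> v}"
    proof (rule set_eqI)
      fix v
      have "v \<in> D \<Longrightarrow> \<not>(y<v \<and> v<x)" using nb by blast
      then show "v \<in> {v\<in>D. y \<le> v} \<longleftrightarrow> v \<in> insert y {v\<in>D. x \<le> v}" using h xy(1) by auto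
    qed
    hence "card {v\<in>D. y \<le> v} = Suc (card {v\<in>D. x \<le> v})" using fin xy(1) by simp
    moreover have "card {v\<in>A. R x v} = card {v\<in>D. x \<le> v}" "card {v\<in>A. R y v} = card {v\<in>D. y \<le> v}"
      using rel h unfolding Rel_def by auto
    ultimately show False using cA by simp
  qed
  have notCC: "\<not>(x\<in>C \<and> y\<in>C)"
  proof
    assume h: "x\<in>C \<and> y\<in>C"
    have "{v\<in>C. y < v} = insert x {v\<in>C. x < v}"
    proof (rule set_eqI)
      fix v
      have "v \<in> C \<Longrightarrow> \<not>(y<v \<and> v<x)" using nb by blast
      then show "v \<in> {v\<in>C. y < v} \<longleftrightarrow> v \<in> insert x {v\<in>C. x < v}" using h xy(1) by auto
    qed
    hence "card {v\<in>C. y < v} = Suc (card {v\<in>C. x < v})" using fin xy(1) by simp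
    moreover have "card {v\<in>B. R x v} = card {v\<in>C. x < v}" "card {v\<in>B. R y v} = card {v\<in>C. y < v}"
      using rel h unfolding Rel_def by auto
    ultimately show False using cA by simp
  qed
  let ?s = "swp x y"
  have cs: "(x \<in> C \<and> x \<notin> D \<and> y \<in> D \<and> y \<notin> C) \<or> (x \<in> D \<and> x \<notin> C \<and> y \<in> C \<and> y \<notin> D)"
    using xy notDD notCC by blast
  have cs2: "(x \<in> D \<and> x \<notin> C \<and> y \<in> C \<and> y \<notin> D) \<or> (x \<in> C \<and> x \<notin> D \<and> y \<in> D \<and> y \<notin> C)"
    using cs by blast
  have Ceq: "(C - {x,y}) \<union> (D \<inter> {x,y}) = ?s ` C" using tog_image[OF cs] xy(1) by simp
  have Deq: "(D - {x,y}) \<union> (C \<inter> {x,y}) = ?s ` D" using tog_image[OF cs2] xy(1) by simp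
  have ord: "\<And>a b. a \<in> C\<union>D \<Longrightarrow> b \<in> C\<union>D \<Longrightarrow> (a \<in> {x,y} \<and> b \<in> {x,y} \<longrightarrow> a = b) \<Longrightarrow>
        (?s a \<le> ?s b \<longleftrightarrow> a \<le> b) \<and> (?s a < ?s b \<longleftrightarrow> a < b)"
  proof -
    fix a b assume ab: "a \<in> C\<union>D" "b \<in> C\<union>D" "a \<in> {x,y} \<and> b \<in> {x,y} \<longrightarrow> a = b"
    have Wa: "a \<le> y \<or> x \<le> a" and Wb: "b \<le> y \<or> x \<le> b" using nb_lem[OF nb] ab(1,2) by blast+
    show "(?s a \<le> ?s b \<longleftrightarrow> a \<le> b) \<and> (?s a < ?s b \<longleftrightarrow> a < b)"
      unfolding swp_def using Wa Wb ab(3) xy(1) by (cases "a=x"; cases "a=y"; cases "b=x"; cases "b=y") auto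
  qed
  have oneD: "\<And>a b. a \<in> D \<Longrightarrow> b \<in> D \<Longrightarrow> a \<in> {x,y} \<and> b \<in> {x,y} \<longrightarrow> a = b" using notDD by auto
  have oneC: "\<And>a b. a \<in> C \<Longrightarrow> b \<in> C \<Longrightarrow> a \<in> {x,y} \<and> b \<in> {x,y} \<longrightarrow> a = b" using notCC by auto
  have sx: "?s x = y" "?s y = x" "\<And>u. u \<noteq> x \<Longrightarrow> u \<noteq> y \<Longrightarrow> ?s u = u"
    unfolding swp_def by auto
  have cRA: "card {v\<in>A. R (?s u) v} = card {v\<in>A. R u v}" for u
  proof -
    consider "u = x" | "u = y" | "u \<noteq> x" "u \<noteq> y" by blast
    then show ?thesis using sx cA by cases simp_all
  qed
  have cRB: "card {v\<in>B. R (?s u) v} = card {v\<in>B. R u v}" for u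
  proof -
    consider "u = x" | "u = y" | "u \<noteq> x" "u \<noteq> y" by blast
    then show ?thesis using sx cA by cases simp_all
  qed
  have relD: "\<forall>z\<in>?s ` D. card {v\<in>A. R z v} = card {v\<in>?s ` D. z \<le> v}"
  proof
    fix z assume "z \<in> ?s ` D"
    then obtain u where u: "u \<in> D" "z = ?s u" by auto
    have "\<And>w. w \<in> D \<Longrightarrow> (?s u \<le> ?s w \<longleftrightarrow> u \<le> w)" using ord oneD u(1) by blast
    then have "{w\<in>D. ?s u \<le> ?s w} = {w\<in>D. u \<le> w}" by blast
    then have "card {v\<in>?s ` D. z \<le> v} = card {w\<in>D. u \<le> w}"
      using card_swp_filter[of x y D "\<lambda>v. z \<le> v"] u(2) by simp
    also have "\<dots> = card {v\<in>A. R u v}" using rel u(1) unfolding Rel_def by auto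
    also have "\<dots> = card {v\<in>A. R z v}" using cRA u(2) by simp
    finally show "card {v\<in>A. R z v} = card {v\<in>?s ` D. z \<le> v}" by simp
  qed
  have relC: "\<forall>z\<in>?s ` C. card {v\<in>B. R z v} = card {v\<in>?s ` C. z < v}"
  proof
    fix z assume "z \<in> ?s ` C"
    then obtain u where u: "u \<in> C" "z = ?s u" by auto
    have "\<And>w. w \<in> C \<Longrightarrow> (?s u < ?s w \<longleftrightarrow> u < w)" using ord oneC u(1) by blast
    then have "{w\<in>C. ?s u < ?s w} = {w\<in>C. u < w}" by blast
    then have "card {v\<in>?s ` C. z < v} = card {w\<in>C. u < w}"
      using card_swp_filter[of x y C "\<lambda>v. z < v"] u(2) by simp
    also have "\<dots> = card {v\<in>B. R u v}" using rel u(1) unfolding Rel_def by auto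
    also have "\<dots> = card {v\<in>B. R z v}" using cRB u(2) by simp
    finally show "card {v\<in>B. R z v} = card {v\<in>?s ` C. z < v}" by simp
  qed
  have cc: "card (?s ` C) = card C" "card (?s ` D) = card D" by (simp_all add: card_image swp_inj)
  show ?thesis unfolding Ceq Deq Rel_def using relD relC cc by blast
qed

lemma T2dir:
  assumes fin: "finite A" "finite B" "finite C" "finite D"
  and xy: "y < x" "x \<in> A \<union> B" "y \<in> A \<union> B" "x \<notin> A \<inter> B" "y \<notin> A \<inter> B"
  and mono: "\<forall>z v w. R z v \<longrightarrow> v \<le> w \<longrightarrow> R z w"
  and eqZ: "\<forall>z\<in>C\<union>D. R z x \<longleftrightarrow> R z y"
  and sz: "card C = card B + e" "card D + 1 = card A + e"
  and rel: "Rel R A B C D"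
  shows "Rel R ((A - {x,y}) \<union> (B \<inter> {x,y})) ((B - {x,y}) \<union> (A \<inter> {x,y})) C D \<and>
         card ((A - {x,y}) \<union> (B \<inter> {x,y})) = card A \<and> card ((B - {x,y}) \<union> (A \<inter> {x,y})) = card B"
proof -
  have key: "\<And>S t h. finite S \<Longrightarrow> x \<in> S \<Longrightarrow> y \<in> S \<Longrightarrow> t \<in> C \<union> D \<Longrightarrow> h = card {v\<in>S. x < v} \<Longrightarrow>
               card {v\<in>S. R t v} \<noteq> Suc h"
  proof
    fix S t h assume S: "finite S" "x \<in> S" "y \<in> S" "t \<in> C \<union> D" "h = card {v\<in>S. x < v}"
      and c: "card {v\<in>S. R t v} = Suc h"
    show False
    proof (cases "R t y")
      case True
      then have Rx: "R t x" using mono xy(1) by auto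
      have "insert x (insert y {v\<in>S. x < v}) \<subseteq> {v\<in>S. R t v}"
        using S True Rx mono by auto
      then have "card (insert x (insert y {v\<in>S. x < v})) \<le> card {v\<in>S. R t v}"
        using S by (intro card_mono) auto
      then show False using c S xy(1) by simp
    next
      case False
      then have "\<not> R t x" using eqZ S by auto
      then have "{v\<in>S. R t v} \<subseteq> {v\<in>S. x < v}" using mono by (metis (mono_tags, lifting) Collect_mono leI)
      then have "card {v\<in>S. R t v} \<le> h" using S by (simp add: card_mono)
      then show False using c by simp
    qed
  qed
  have bigS: "\<And>S. finite S \<Longrightarrow> x \<in> S \<Longrightarrow> y \<in> S \<Longrightarrow> Suc (Suc (card {v\<in>S. x < v})) \<le> card S"
  proof -
    fix S assume S: "finite (S::nat set)" "x \<in> S" "y \<in> S"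
    have "insert x (insert y {v\<in>S. x < v}) \<subseteq> S" using S by auto
    then have "card (insert x (insert y {v\<in>S. x < v})) \<le> card S" using S by (intro card_mono) auto
    then show "Suc (Suc (card {v\<in>S. x < v})) \<le> card S" using S xy(1) by simp
  qed
  have notAA: "\<not>(x\<in>A \<and> y\<in>A)"
  proof
    assume h: "x\<in>A \<and> y\<in>A"
    let ?h = "card {v\<in>A. x < v}"
    have "card D \<le> ?h"
    proof (rule ccontr)
      assume "\<not> ?thesis"
      then obtain d where d: "d \<in> D" "card {v\<in>D. d \<le> v} = Suc ?h"
        using rank_exists_ge[OF fin(4), of ?h] by auto
      then have "card {v\<in>A. R d v} = Suc ?h" using rel unfolding Rel_def by auto
      then show False using key[OF fin(1)] h d by auto
    qed
    moreover have "Suc (Suc ?h) \<le> card A" using bigS[OF fin(1)] h by blast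
    ultimately show False using sz(2) by linarith
  qed
  have notBB: "\<not>(x\<in>B \<and> y\<in>B)"
  proof
    assume h: "x\<in>B \<and> y\<in>B"
    let ?h = "card {v\<in>B. x < v}"
    have "card C \<le> Suc ?h"
    proof (rule ccontr)
      assume "\<not> ?thesis"
      then obtain c where c: "c \<in> C" "card {v\<in>C. c < v} = Suc ?h"
        using rank_exists_gt[OF fin(3), of "Suc ?h"] by auto
      then have "card {v\<in>B. R c v} = Suc ?h" using rel unfolding Rel_def by auto
      then show False using key[OF fin(2)] h c by auto
    qed
    moreover have "Suc (Suc ?h) \<le> card B" using bigS[OF fin(2)] h by blast
    ultimately show False using sz(1) by linarith
  qed
  let ?s = "swp x y"
  have cs: "(x \<in> A \<and> x \<notin> B \<and> y \<in> B \<and> y \<notin> A) \<or> (x \<in> B \<and> x \<notin> A \<and> y \<in> A \<and> y \<notin> B)"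
    using xy notAA notBB by blast
  have cs2: "(x \<in> B \<and> x \<notin> A \<and> y \<in> A \<and> y \<notin> B) \<or> (x \<in> A \<and> x \<notin> B \<and> y \<in> B \<and> y \<notin> A)"
    using cs by blast
  have Aeq: "(A - {x,y}) \<union> (B \<inter> {x,y}) = ?s ` A" using tog_image[OF cs] xy(1) by simp
  have Beq: "(B - {x,y}) \<union> (A \<inter> {x,y}) = ?s ` B" using tog_image[OF cs2] xy(1) by simp
  have cz: "\<And>z S. z \<in> C \<union> D \<Longrightarrow> card {v\<in>?s ` S. R z v} = card {v\<in>S. R z v}"
  proof -
    fix z S assume z: "z \<in> C \<union> D"
    have e: "R z x \<longleftrightarrow> R z y" using eqZ z by blast
    have "\<And>u. R z (?s u) \<longleftrightarrow> R z u" unfolding swp_def using e by auto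
    then have "{u\<in>S. R z (?s u)} = {u\<in>S. R z u}" by simp
    then show "card {v\<in>?s ` S. R z v} = card {v\<in>S. R z v}" using card_swp_filter[of x y S "R z"] by simp
  qed
  have r1: "\<forall>z\<in>D. card {v\<in>?s ` A. R z v} = card {v\<in>D. z \<le> v}"
    using rel cz unfolding Rel_def by simp
  have r2: "\<forall>z\<in>C. card {v\<in>?s ` B. R z v} = card {v\<in>C. z < v}"
    using rel cz unfolding Rel_def by simp
  have c: "card (?s ` A) = card A" "card (?s ` B) = card B" by (simp_all add: card_image swp_inj)
  show ?thesis unfolding Aeq Beq Rel_def using r1 r2 c by blast
qed

lemma upc_R: "\<forall>z v w. R z v \<longrightarrow> v \<le> w \<longrightarrow> R z w \<Longrightarrow> upc (R t)"
  unfolding upc_def by blast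

lemma upc_lt: "upc (\<lambda>v. (t::nat) < v)" and upc_le: "upc (\<lambda>v. (t::nat) \<le> v)"
  unfolding upc_def by auto


lemma Gi:
  assumes iZ: "interl t0 b0" and iZ': "interl c0 d0"
  and mono: "\<forall>z v w. R z v \<longrightarrow> v \<le> w \<longrightarrow> R z w"
  and anti: "\<forall>z z' v. R z v \<longrightarrow> z' \<le> z \<longrightarrow> R z' v"
  and xy: "y < x" "(x \<in> set c0 \<and> x \<notin> set d0 \<and> y \<in> set d0 \<and> y \<notin> set c0) \<or>
                   (x \<in> set d0 \<and> x \<notin> set c0 \<and> y \<in> set c0 \<and> y \<notin> set d0)"
  and nb: "\<forall>v\<in>set c0 \<union> set d0. \<not>(y<v \<and> v<x)"
  and rel: "Rel R (set t0) (set b0) ((set c0 - {x,y}) \<union> (set d0 \<inter> {x,y})) ((set d0 - {x,y}) \<union> (set c0 \<inter> {x,y}))"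
  shows "\<forall>v\<in>set t0 \<union> set b0. R x v \<longleftrightarrow> R y v"
proof -
  define A0 where "A0 = set t0"
  define B0 where "B0 = set b0"
  define C0 where "C0 = set c0"
  define D0 where "D0 = set d0"
  have fin: "finite A0" "finite B0" "finite C0" "finite D0" unfolding A0_def B0_def C0_def D0_def by auto
  have SZ: "card {v\<in>B0. R t v} \<le> card {v\<in>A0. R t v} \<and> card {v\<in>A0. R t v} \<le> Suc (card {v\<in>B0. R t v})" for t
    unfolding A0_def B0_def using SL[OF iZ upc_R[OF mono, of t]] by simp
  have Sgt: "card {v\<in>D0. t < v} \<le> card {v\<in>C0. t < v} \<and> card {v\<in>C0. t < v} \<le> Suc (card {v\<in>D0. t < v})" for t
    unfolding C0_def D0_def using SL[OF iZ' upc_lt[of t]] by simp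
  have Sge: "card {v\<in>D0. t \<le> v} \<le> card {v\<in>C0. t \<le> v} \<and> card {v\<in>C0. t \<le> v} \<le> Suc (card {v\<in>D0. t \<le> v})" for t
    unfolding C0_def D0_def using SL[OF iZ' upc_le[of t]] by simp
  have subA: "{v\<in>A0. R x v} \<subseteq> {v\<in>A0. R y v}" and subB: "{v\<in>B0. R x v} \<subseteq> {v\<in>B0. R y v}"
    using anti xy(1) by auto
  have ca: "card {v\<in>A0. R x v} \<le> card {v\<in>A0. R y v}" "card {v\<in>B0. R x v} \<le> card {v\<in>B0. R y v}"
    using subA subB fin by (simp_all add: card_mono)
  have nbv: "\<And>v. v \<in> C0 \<union> D0 \<Longrightarrow> v \<le> y \<or> x \<le> v" using nb_lem[OF nb] unfolding C0_def D0_def by blast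
  let ?C = "(C0 - {x,y}) \<union> (D0 \<inter> {x,y})" and ?D = "(D0 - {x,y}) \<union> (C0 \<inter> {x,y})"
  have relD: "\<forall>z\<in>?D. card {v\<in>A0. R z v} = card {v\<in>?D. z \<le> v}"
    and relC: "\<forall>z\<in>?C. card {v\<in>B0. R z v} = card {v\<in>?C. z < v}"
    using rel unfolding Rel_def A0_def B0_def C0_def D0_def by auto
  have eqs: "card {v\<in>A0. R y v} = card {v\<in>A0. R x v} \<and> card {v\<in>B0. R y v} = card {v\<in>B0. R x v}"
  proof -
    from xy(2) consider (a) "x \<in> C0" "x \<notin> D0" "y \<in> D0" "y \<notin> C0" | (b) "x \<in> D0" "x \<notin> C0" "y \<in> C0" "y \<notin> D0"
      unfolding C0_def D0_def by blast
    then show ?thesis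
    proof cases
      case a
      have e1: "{v\<in>?D. x \<le> v} = insert x {v\<in>D0. x < v}"
      proof (rule set_eqI)
        fix v show "v \<in> {v\<in>?D. x \<le> v} \<longleftrightarrow> v \<in> insert x {v\<in>D0. x < v}"
          using a xy(1) by (cases "v = x") auto
      qed
      have e2: "{v\<in>?C. y < v} = {v\<in>C0. x < v}"
      proof (rule set_eqI)
        fix v
        have "v \<in> C0 \<Longrightarrow> v \<le> y \<or> x \<le> v" using nbv by blast
        then show "v \<in> {v\<in>?C. y < v} \<longleftrightarrow> v \<in> {v\<in>C0. x < v}"
          using a xy(1) by (cases "v = x") auto
      qed
      have e3: "{v\<in>C0. x \<le> v} = insert x {v\<in>C0. x < v}" using a by auto
      have e4: "{v\<in>D0. x \<le> v} = {v\<in>D0. x < v}" using a by (auto simp: order_le_less)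
      have h1: "card {v\<in>A0. R x v} = Suc (card {v\<in>D0. x < v})"
        using relD a e1 fin by simp
      have h2: "card {v\<in>B0. R y v} = card {v\<in>C0. x < v}"
        using relC a e2 by simp
      have h3: "card {v\<in>C0. x < v} = card {v\<in>D0. x < v}"
        using Sge[of x] Sgt[of x] e3 e4 fin by simp
      show ?thesis using SZ[of x] SZ[of y] ca h1 h2 h3 by linarith
    next
      case b
      have e1: "{v\<in>?C. x < v} = {v\<in>C0. x < v}"
        using b xy(1) by auto
      have e2: "{v\<in>?D. y \<le> v} = insert y {v\<in>D0. x < v}"
      proof (rule set_eqI)
        fix v
        have "v \<in> D0 \<Longrightarrow> v \<le> y \<or> x \<le> v" using nbv by blast
        then show "v \<in> {v\<in>?D. y \<le> v} \<longleftrightarrow> v \<in> insert y {v\<in>D0. x < v}"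
          using b xy(1) by (cases "v = x"; cases "v = y") auto
      qed
      have e3: "{v\<in>D0. x \<le> v} = insert x {v\<in>D0. x < v}" using b by auto
      have e4: "{v\<in>C0. x \<le> v} = {v\<in>C0. x < v}" using b by (auto simp: order_le_less)
      have h1: "card {v\<in>B0. R x v} = card {v\<in>C0. x < v}"
        using relC b e1 by simp
      have h2: "card {v\<in>A0. R y v} = Suc (card {v\<in>D0. x < v})"
        using relD b e2 fin xy(1) by simp
      have h3: "card {v\<in>C0. x < v} = Suc (card {v\<in>D0. x < v})"
        using Sge[of x] Sgt[of x] e3 e4 fin by simp
      show ?thesis using SZ[of x] SZ[of y] ca h1 h2 h3 by linarith
    qed
  qed
  have "{v\<in>A0. R x v} = {v\<in>A0. R y v}" using subA eqs fin by (intro card_subset_eq) auto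
  moreover have "{v\<in>B0. R x v} = {v\<in>B0. R y v}" using subB eqs fin by (intro card_subset_eq) auto
  ultimately show ?thesis unfolding A0_def B0_def by blast
qed

lemma Gii:
  assumes iZ: "interl t0 b0" and iZ': "interl c0 d0"
  and mono: "\<forall>z v w. R z v \<longrightarrow> v \<le> w \<longrightarrow> R z w"
  and anti: "\<forall>z z' v. R z v \<longrightarrow> z' \<le> z \<longrightarrow> R z' v"
  and xy: "y < x" "(x \<in> set t0 \<and> x \<notin> set b0 \<and> y \<in> set b0 \<and> y \<notin> set t0) \<or>
                   (x \<in> set b0 \<and> x \<notin> set t0 \<and> y \<in> set t0 \<and> y \<notin> set b0)"
  and nb: "\<forall>v\<in>set t0 \<union> set b0. \<not>(y<v \<and> v<x)"
  and rel: "Rel R ((set t0 - {x,y}) \<union> (set b0 \<inter> {x,y})) ((set b0 - {x,y}) \<union> (set t0 \<inter> {x,y})) (set c0) (set d0)"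
  and sz: "card (set c0) = card ((set b0 - {x,y}) \<union> (set t0 \<inter> {x,y})) + e"
          "card (set d0) + 1 = card ((set t0 - {x,y}) \<union> (set b0 \<inter> {x,y})) + e"
  shows "\<forall>z\<in>set c0 \<union> set d0. R z x \<longleftrightarrow> R z y"
proof -
  define A0 where "A0 = set t0"
  define B0 where "B0 = set b0"
  define C0 where "C0 = set c0"
  define D0 where "D0 = set d0"
  let ?A = "(A0 - {x,y}) \<union> (B0 \<inter> {x,y})" and ?B = "(B0 - {x,y}) \<union> (A0 \<inter> {x,y})"
  have fin: "finite A0" "finite B0" "finite C0" "finite D0" "finite ?A" "finite ?B"
    unfolding A0_def B0_def C0_def D0_def by auto
  have SZgt: "card {v\<in>B0. t < v} \<le> card {v\<in>A0. t < v} \<and> card {v\<in>A0. t < v} \<le> Suc (card {v\<in>B0. t < v})" for t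
    unfolding A0_def B0_def using SL[OF iZ upc_lt[of t]] by simp
  have SZge: "card {v\<in>B0. t \<le> v} \<le> card {v\<in>A0. t \<le> v} \<and> card {v\<in>A0. t \<le> v} \<le> Suc (card {v\<in>B0. t \<le> v})" for t
    unfolding A0_def B0_def using SL[OF iZ upc_le[of t]] by simp
  have Sgt: "card {v\<in>D0. t < v} \<le> card {v\<in>C0. t < v} \<and> card {v\<in>C0. t < v} \<le> Suc (card {v\<in>D0. t < v})" for t
    unfolding C0_def D0_def using SL[OF iZ' upc_lt[of t]] by simp
  have Sge: "card {v\<in>D0. t \<le> v} \<le> card {v\<in>C0. t \<le> v} \<and> card {v\<in>C0. t \<le> v} \<le> Suc (card {v\<in>D0. t \<le> v})" for t
    unfolding C0_def D0_def using SL[OF iZ' upc_le[of t]] by simp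
  have relD: "\<forall>z\<in>D0. card {v\<in>?A. R z v} = card {v\<in>D0. z \<le> v}"
    and relC: "\<forall>z\<in>C0. card {v\<in>?B. R z v} = card {v\<in>C0. z < v}"
    using rel unfolding Rel_def A0_def B0_def C0_def D0_def by auto
  have sz': "card C0 = card ?B + e" "card D0 + 1 = card ?A + e"
    using sz unfolding A0_def B0_def C0_def D0_def by auto
  have nbv: "\<And>v. v \<in> A0 \<union> B0 \<Longrightarrow> v \<le> y \<or> x \<le> v" using nb_lem[OF nb] unfolding A0_def B0_def by blast
  have FG: "\<And>t S. S \<subseteq> A0 \<union> B0 \<Longrightarrow> R t x \<Longrightarrow> \<not> R t y \<Longrightarrow> {v\<in>S. R t v} = {v\<in>S. x \<le> v}"
  proof -
    fix t S assume S: "S \<subseteq> A0 \<union> B0" and t: "R t x" "\<not> R t y"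
    show "{v\<in>S. R t v} = {v\<in>S. x \<le> v}"
    proof (rule set_eqI)
      fix v
      have "v \<in> S \<Longrightarrow> v \<le> y \<or> x \<le> v" using nbv S by blast
      moreover have "v \<le> y \<Longrightarrow> \<not> R t v" using mono t by blast
      moreover have "x \<le> v \<Longrightarrow> R t v" using mono t by blast
      ultimately show "v \<in> {v\<in>S. R t v} \<longleftrightarrow> v \<in> {v\<in>S. x \<le> v}" using xy(1) by auto
    qed
  qed
  have FA: "{v\<in>S. R t v} \<subseteq> {v\<in>S. x < v}" if "\<not> R t x" for t S
  proof
    fix v assume v: "v \<in> {v\<in>S. R t v}"
    have "x < v"
    proof (rule ccontr)
      assume "\<not> x < v"
      then have "v \<le> x" by simp
      then have "R t x" using mono v by blast
      then show False using that by simp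
    qed
    then show "v \<in> {v\<in>S. x < v}" using v by simp
  qed
  have FB: "{v\<in>S. y \<le> v} \<subseteq> {v\<in>S. R t v}" if "R t y" for t S
    using mono that by blast
  have Ssub: "?A \<subseteq> A0 \<union> B0" "?B \<subseteq> A0 \<union> B0" by auto
  show ?thesis
  proof (rule ccontr)
    assume "\<not> ?thesis"
    then obtain z where z: "z \<in> C0 \<union> D0" "\<not> (R z x \<longleftrightarrow> R z y)" unfolding C0_def D0_def by blast
    have "R z y \<Longrightarrow> R z x" using mono xy(1) by auto
    then have G: "R z x" "\<not> R z y" using z(2) by auto
    have above: "z < t" if "\<not> R t x" for t
    proof (rule ccontr)
      assume "\<not> z < t"
      then have "t \<le> z" by simp
      then have "R t x" using anti G(1) by blast
      then show False using that by simp
    qed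
    have below: "t < z" if "R t y" for t
    proof (rule ccontr)
      assume "\<not> t < z"
      then have "z \<le> t" by simp
      then have "R z y" using anti that by blast
      then show False using G(2) by simp
    qed
    from xy(2) consider (a) "x \<in> A0" "x \<notin> B0" "y \<in> B0" "y \<notin> A0" | (b) "x \<in> B0" "x \<notin> A0" "y \<in> A0" "y \<notin> B0"
      unfolding A0_def B0_def by blast
    then show False
    proof cases
      case a
      define j where "j = card {v\<in>A0. x < v}"
      have eB: "card {v\<in>B0. x < v} = j"
      proof -
        have "{v\<in>A0. x \<le> v} = insert x {v\<in>A0. x < v}" "{v\<in>B0. x \<le> v} = {v\<in>B0. x < v}"
          using a by (auto simp: order_le_less)
        then show ?thesis using SZgt[of x] SZge[of x] fin j_def by simp
      qed
      have A1: "{v\<in>?A. x \<le> v} = {v\<in>A0. x < v}" using a xy(1) by (auto simp: order_le_less)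
      have A2: "{v\<in>?A. x < v} = {v\<in>A0. x < v}" using a xy(1) by auto
      have A3: "insert y {v\<in>A0. x < v} \<subseteq> {v\<in>?A. y \<le> v}" using a xy(1) by auto
      have B1: "{v\<in>?B. x \<le> v} = insert x {v\<in>B0. x < v}" using a xy(1) by (auto simp: order_le_less)
      have B2: "{v\<in>?B. x < v} = {v\<in>B0. x < v}" using a xy(1) by auto
      have B3: "insert x {v\<in>B0. x < v} \<subseteq> {v\<in>?B. y \<le> v}" using a xy(1) by auto
      have cAG: "\<And>t. R t x \<Longrightarrow> \<not> R t y \<Longrightarrow> card {v\<in>?A. R t v} = j"
        using FG[OF Ssub(1)] A1 j_def by simp
      have cBG: "\<And>t. R t x \<Longrightarrow> \<not> R t y \<Longrightarrow> card {v\<in>?B. R t v} = Suc j"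
        using FG[OF Ssub(2)] B1 eB fin a by simp
      have cAa: "card {v\<in>?A. R t v} \<le> j" if "\<not> R t x" for t
      proof -
        have "card {v\<in>?A. R t v} \<le> card {v\<in>?A. x < v}" using FA[OF that] fin by (intro card_mono) auto
        then show ?thesis using A2 j_def by simp
      qed
      have cBa: "card {v\<in>?B. R t v} \<le> j" if "\<not> R t x" for t
      proof -
        have "card {v\<in>?B. R t v} \<le> card {v\<in>?B. x < v}" using FA[OF that] fin by (intro card_mono) auto
        then show ?thesis using B2 eB by simp
      qed
      have cAb: "\<And>t. R t y \<Longrightarrow> Suc j \<le> card {v\<in>?A. R t v}"
      proof -
        fix t assume "R t y"
        then have "insert y {v\<in>A0. x < v} \<subseteq> {v\<in>?A. R t v}" using A3 FB by blast
        then have "card (insert y {v\<in>A0. x < v}) \<le> card {v\<in>?A. R t v}" using fin by (intro card_mono) auto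
        then show "Suc j \<le> card {v\<in>?A. R t v}" using fin xy(1) j_def by simp
      qed
      have cBb: "\<And>t. R t y \<Longrightarrow> Suc j \<le> card {v\<in>?B. R t v}"
      proof -
        fix t assume "R t y"
        then have "insert x {v\<in>B0. x < v} \<subseteq> {v\<in>?B. R t v}" using B3 FB by blast
        then have "card (insert x {v\<in>B0. x < v}) \<le> card {v\<in>?B. R t v}" using fin by (intro card_mono) auto
        then show "Suc j \<le> card {v\<in>?B. R t v}" using fin eB by simp
      qed
      have szB: "Suc j \<le> card ?B"
      proof -
        have "card (insert x {v\<in>B0. x < v}) \<le> card ?B" using fin a xy(1) by (intro card_mono) auto
        then show ?thesis using fin eB by simp
      qed
      show False
      proof (cases "z \<in> D0")
        case True
        have "card {v\<in>D0. z \<le> v} = j" using bspec[OF relD True] cAG[OF G] by simp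
        moreover have "{v\<in>D0. z \<le> v} = insert z {v\<in>D0. z < v}" using True by auto
        ultimately have "Suc (card {v\<in>D0. z < v}) = j" using fin by simp
        then have gz: "card {v\<in>C0. z < v} \<le> j" using Sgt[of z] by simp
        have "j < card C0" using szB sz' by simp
        then obtain c where c: "c \<in> C0" "card {v\<in>C0. c < v} = j" using rank_exists_gt[OF fin(3)] by blast
        then have cb: "card {v\<in>?B. R c v} = j" using relC by simp
        have "\<not> R c x"
        proof
          assume Rx: "R c x"
          show False
          proof (cases "R c y")
            case True then show False using cBb[OF True] cb by simp
          next
            case False then show False using cBG[OF Rx False] Rx cb by simp
          qed
        qed
        then have "z < c" by (rule above)
        then have "insert c {v\<in>C0. c < v} \<subseteq> {v\<in>C0. z < v}" using c by auto
        then have "card (insert c {v\<in>C0. c < v}) \<le> card {v\<in>C0. z < v}" using fin by (intro card_mono) auto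
        then show False using gz c fin by simp
      next
        case False
        then have zC: "z \<in> C0" using z by blast
        have "card {v\<in>C0. z < v} = Suc j" using bspec[OF relC zC] cBG[OF G] by simp
        moreover have "{v\<in>C0. z \<le> v} = insert z {v\<in>C0. z < v}" using zC by auto
        ultimately have "card {v\<in>C0. z \<le> v} = Suc (Suc j)" using fin by simp
        then have gz: "Suc j \<le> card {v\<in>D0. z \<le> v}" using Sge[of z] by simp
        have "card {v\<in>D0. z \<le> v} \<le> card D0" using fin by (intro card_mono) auto
        then have "j < card D0" using gz by simp
        then obtain d where d: "d \<in> D0" "card {v\<in>D0. d \<le> v} = Suc j" using rank_exists_ge[OF fin(4)] by blast
        then have ca: "card {v\<in>?A. R d v} = Suc j" using relD by simp
        have "R d y"
        proof (rule ccontr)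
          assume "\<not> R d y"
          then show False
          proof (cases "R d x")
            case True then show False using ca cAG[OF True \<open>\<not> R d y\<close>] by simp
          next
            case False then show False using ca cAa[OF False] by simp
          qed
        qed
        then have "d < z" by (rule below)
        then have "{v\<in>D0. z \<le> v} \<subseteq> {v\<in>D0. d \<le> v} - {d}" by auto
        then have "card {v\<in>D0. z \<le> v} \<le> card ({v\<in>D0. d \<le> v} - {d})" using fin by (intro card_mono) auto
        then show False using gz d fin by simp
      qed
    next
      case b
      define j where "j = card {v\<in>B0. x < v}"
      have eA: "card {v\<in>A0. x < v} = Suc j"
      proof -
        have "{v\<in>B0. x \<le> v} = insert x {v\<in>B0. x < v}" "{v\<in>A0. x \<le> v} = {v\<in>A0. x < v}"
          using b by (auto simp: order_le_less)
        then show ?thesis using SZgt[of x] SZge[of x] fin j_def by simp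
      qed
      have A1: "{v\<in>?A. x \<le> v} = insert x {v\<in>A0. x < v}" using b xy(1) by (auto simp: order_le_less)
      have A2: "{v\<in>?A. x < v} = {v\<in>A0. x < v}" using b xy(1) by auto
      have A3: "insert x {v\<in>A0. x < v} \<subseteq> {v\<in>?A. y \<le> v}" using b xy(1) by auto
      have B1: "{v\<in>?B. x \<le> v} = {v\<in>B0. x < v}" using b xy(1) by (auto simp: order_le_less)
      have B2: "{v\<in>?B. x < v} = {v\<in>B0. x < v}" using b xy(1) by auto
      have B3: "insert y {v\<in>B0. x < v} \<subseteq> {v\<in>?B. y \<le> v}" using b xy(1) by auto
      have cAG: "\<And>t. R t x \<Longrightarrow> \<not> R t y \<Longrightarrow> card {v\<in>?A. R t v} = Suc (Suc j)"
        using FG[OF Ssub(1)] A1 eA fin b by simp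
      have cBG: "\<And>t. R t x \<Longrightarrow> \<not> R t y \<Longrightarrow> card {v\<in>?B. R t v} = j"
        using FG[OF Ssub(2)] B1 j_def by simp
      have cAa: "card {v\<in>?A. R t v} \<le> Suc j" if "\<not> R t x" for t
      proof -
        have "card {v\<in>?A. R t v} \<le> card {v\<in>?A. x < v}" using FA[OF that] fin by (intro card_mono) auto
        then show ?thesis using A2 eA by simp
      qed
      have cBa: "card {v\<in>?B. R t v} \<le> j" if "\<not> R t x" for t
      proof -
        have "card {v\<in>?B. R t v} \<le> card {v\<in>?B. x < v}" using FA[OF that] fin by (intro card_mono) auto
        then show ?thesis using B2 j_def by simp
      qed
      have cAb: "\<And>t. R t y \<Longrightarrow> Suc (Suc j) \<le> card {v\<in>?A. R t v}"
      proof -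
        fix t assume "R t y"
        then have "insert x {v\<in>A0. x < v} \<subseteq> {v\<in>?A. R t v}" using A3 FB by blast
        then have "card (insert x {v\<in>A0. x < v}) \<le> card {v\<in>?A. R t v}" using fin by (intro card_mono) auto
        then show "Suc (Suc j) \<le> card {v\<in>?A. R t v}" using fin eA by simp
      qed
      have cBb: "\<And>t. R t y \<Longrightarrow> Suc j \<le> card {v\<in>?B. R t v}"
      proof -
        fix t assume "R t y"
        then have "insert y {v\<in>B0. x < v} \<subseteq> {v\<in>?B. R t v}" using B3 FB by blast
        then have "card (insert y {v\<in>B0. x < v}) \<le> card {v\<in>?B. R t v}" using fin by (intro card_mono) auto
        then show "Suc j \<le> card {v\<in>?B. R t v}" using fin j_def xy(1) by simp
      qed
      have szA: "Suc (Suc j) \<le> card ?A"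
      proof -
        have "card (insert x {v\<in>A0. x < v}) \<le> card ?A" using fin b xy(1) by (intro card_mono) auto
        then show ?thesis using fin eA by simp
      qed
      show False
      proof (cases "z \<in> D0")
        case True
        have gz0: "card {v\<in>D0. z \<le> v} = Suc (Suc j)" using bspec[OF relD True] cAG[OF G] by simp
        then have gz: "Suc (Suc j) \<le> card {v\<in>C0. z \<le> v}" using Sge[of z] by simp
        have "card {v\<in>C0. z \<le> v} \<le> card C0" using fin by (intro card_mono) auto
        then have "Suc j < card C0" using gz by simp
        then obtain c where c: "c \<in> C0" "card {v\<in>C0. c < v} = Suc j" using rank_exists_gt[OF fin(3)] by blast
        then have cb: "card {v\<in>?B. R c v} = Suc j" using relC by simp
        have "R c y"
        proof (rule ccontr)
          assume "\<not> R c y"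
          then show False
          proof (cases "R c x")
            case True then show False using cb cBG[OF True \<open>\<not> R c y\<close>] by simp
          next
            case False then show False using cb cBa[OF False] by simp
          qed
        qed
        then have "c < z" by (rule below)
        then have "{v\<in>C0. z \<le> v} \<subseteq> {v\<in>C0. c < v}" by auto
        then have "card {v\<in>C0. z \<le> v} \<le> card {v\<in>C0. c < v}" using fin by (intro card_mono) auto
        then show False using gz c by simp
      next
        case False
        then have zC: "z \<in> C0" using z by blast
        have "card {v\<in>C0. z < v} = j" using bspec[OF relC zC] cBG[OF G] by simp
        then have gz: "card {v\<in>D0. z < v} \<le> j" using Sgt[of z] by simp
        have "j < card D0" using szA sz' by simp
        then obtain d where d: "d \<in> D0" "card {v\<in>D0. d \<le> v} = Suc j" using rank_exists_ge[OF fin(4)] by blast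
        then have ca: "card {v\<in>?A. R d v} = Suc j" using relD by simp
        have "\<not> R d x"
        proof
          assume Rx: "R d x"
          show False
          proof (cases "R d y")
            case True then show False using cAb[OF True] ca by simp
          next
            case False then show False using cAG[OF Rx False] Rx ca by simp
          qed
        qed
        then have "z < d" by (rule above)
        then have "{v\<in>D0. d \<le> v} \<subseteq> {v\<in>D0. z < v}" by auto
        then have "card {v\<in>D0. d \<le> v} \<le> card {v\<in>D0. z < v}" using fin by (intro card_mono) auto
        then show False using gz d by simp
      qed
    qed
  qed
qed

lemma size_arith:
  fixes a b c d m e :: nat
  assumes "a + b = 2*m + 1" "c + d = 2*(m+e)" "int c - int d = 1 - (int a - int b)"
  shows "c = b + e \<and> d + 1 = a + e"
proof -
  have "int (c + a) = int (1 + b + d)" using assms(3) by simp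
  then have h: "c + a = 1 + b + d" by (simp only: of_nat_eq_iff)
  have m2: "c + d = 2*m + 2*e" using assms(2) by simp
  have "2*c = 2*b + 2*e" using h assms(1) m2 by linarith
  then have c: "c = b + e" by simp
  then show ?thesis using h by linarith
qed

lemma symdiff_twice: "((N \<union> P) - (N \<inter> P) \<union> P) - (((N \<union> P) - (N \<inter> P)) \<inter> P) = (N::nat set)"
  by blast

lemma symdiff_sub: "N \<subseteq> S \<Longrightarrow> P \<subseteq> S \<Longrightarrow> (N \<union> P) - (N \<inter> P) \<subseteq> (S::nat set)"
  by blast

lemma consec_xy:
  assumes iY: "interl (fst Y) (snd Y)" and cp: "consec_pair Y P"
  shows "\<exists>x y. y < x \<and> P = {x,y} \<and> P \<subseteq> sym_I Y \<and>
     ((x \<in> set (fst Y) \<and> x \<notin> set (snd Y) \<and> y \<in> set (snd Y) \<and> y \<notin> set (fst Y)) \<or>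
      (x \<in> set (snd Y) \<and> x \<notin> set (fst Y) \<and> y \<in> set (fst Y) \<and> y \<notin> set (snd Y))) \<and>
     (\<forall>v\<in>set (fst Y) \<union> set (snd Y). \<not>(y<v \<and> v<x))"
proof -
  obtain k l where kl: "k < length (fst Y)" "l < length (snd Y)" "l = k \<or> l + 1 = k"
    "P = {fst Y ! k, snd Y ! l}" "P \<subseteq> sym_I Y" "card P = 2"
    using cp unfolding consec_pair_def by blast
  let ?p = "fst Y ! k" and ?q = "snd Y ! l"
  have pq: "?p \<noteq> ?q" using kl(4,6) by auto
  have mem: "?p \<in> set (fst Y)" "?q \<in> set (snd Y)" using kl(1,2) by auto
  have mem2: "?p \<notin> set (snd Y)" "?q \<notin> set (fst Y)" using kl(4,5) mem unfolding sym_I_def by auto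
  have adj: "\<forall>v\<in>set (fst Y) \<union> set (snd Y). \<not>(min ?p ?q < v \<and> v < max ?p ?q)"
    using ADJ[OF iY kl(1,2)] kl(3) by auto
  show ?thesis
  proof (cases "?q < ?p")
    case True
    then show ?thesis using kl mem mem2 adj by (intro exI[of _ ?p] exI[of _ ?q]) (auto simp: max_def min_def)
  next
    case False
    then have "?p < ?q" using pq by simp
    then show ?thesis using kl mem mem2 adj by (intro exI[of _ ?q] exI[of _ ?p]) (auto simp: max_def min_def insert_commute)
  qed
qed

theorem lemma0808:
  fixes Z Z' :: symbol and M N :: "nat set"
  assumes "special_def1 Z" and "special_def0 Z'"
    and "length (fst Z') = length (snd Z) \<or> length (fst Z') = length (snd Z) + 1"
    and "Dset Z Z' \<noteq> {}"
    and "M \<subseteq> sym_I Z" and "N \<subseteq> sym_I Z'"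
  shows "(\<forall>P'. consec_pair Z' P' \<and> (Z, lam Z' P') \<in> Dset Z Z' \<longrightarrow>
            (Bplus Z Z' (lam Z M) (lam Z' N) \<longleftrightarrow>
             Bplus Z Z' (lam Z M) (lam Z' ((N \<union> P') - (N \<inter> P')))))
       \<and> (\<forall>P. consec_pair Z P \<and> (lam Z P, Z') \<in> Dset Z Z' \<longrightarrow>
            (Bplus Z Z' (lam Z M) (lam Z' N) \<longleftrightarrow>
             Bplus Z Z' (lam Z ((M \<union> P) - (M \<inter> P))) (lam Z' N)))"
proof -
  have iZ: "interl (fst Z) (snd Z)" using special1_interl[OF assms(1)] .
  have iZ': "interl (fst Z') (snd Z')" using special0_interl[OF assms(2)] .
  define R :: "nat \<Rightarrow> nat \<Rightarrow> bool" where "R = (if length (fst Z') = length (snd Z) then (<) else (\<le>))"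
  define e :: nat where "e = (if length (fst Z') = length (snd Z) then 0 else 1)"
  have mono: "\<forall>z v w. R z v \<longrightarrow> v \<le> w \<longrightarrow> R z w" unfolding R_def by auto
  have anti: "\<forall>z z' v. R z v \<longrightarrow> z' \<le> z \<longrightarrow> R z' v" unfolding R_def by auto
  have lenZ: "length (fst Z) + length (snd Z) = 2 * length (snd Z) + 1"
    using assms(1) unfolding special_def1_def by simp
  have lenZ': "length (fst Z') + length (snd Z') = 2 * (length (snd Z) + e)"
    using assms(2,3) unfolding special_def0_def e_def by auto
  have distZ: "card (set (fst Z)) = length (fst Z)" "card (set (snd Z)) = length (snd Z)"
    "card (set (fst Z')) = length (fst Z')" "card (set (snd Z')) = length (snd Z')"
    using iZ iZ' strict_decr_distinct by (auto simp: interl_def distinct_card)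
  have BI: "\<And>L L'. L \<in> Sbar Z \<Longrightarrow> L' \<in> Sbar Z' \<Longrightarrow> Bplus Z Z' L L' \<longleftrightarrow> defect L' = 1 - defect L \<and>
      Rel R (set (fst L)) (set (snd L)) (set (fst L')) (set (snd L'))"
    unfolding R_def by (rule Bplus_iff)
  have sizes: "\<And>M N. M \<subseteq> sym_I Z \<Longrightarrow> N \<subseteq> sym_I Z' \<Longrightarrow> defect (lam Z' N) = 1 - defect (lam Z M) \<Longrightarrow>
      card (set (fst (lam Z' N))) = card (set (snd (lam Z M))) + e \<and>
      card (set (snd (lam Z' N))) + 1 = card (set (fst (lam Z M))) + e"
  proof -
    fix M N assume MN: "M \<subseteq> sym_I Z" "N \<subseteq> sym_I Z'" "defect (lam Z' N) = 1 - defect (lam Z M)"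
    show "card (set (fst (lam Z' N))) = card (set (snd (lam Z M))) + e \<and>
      card (set (snd (lam Z' N))) + 1 = card (set (fst (lam Z M))) + e"
      apply (rule size_arith[where m = "length (snd Z)"])
      using lam_card[OF MN(1)] lam_card[OF MN(2)] lenZ lenZ' distZ MN(3) lam_defect by auto
  qed
  have part1: "\<forall>P'. consec_pair Z' P' \<and> (Z, lam Z' P') \<in> Dset Z Z' \<longrightarrow>
            (Bplus Z Z' (lam Z M) (lam Z' N) \<longleftrightarrow>
             Bplus Z Z' (lam Z M) (lam Z' ((N \<union> P') - (N \<inter> P'))))"
  proof (intro allI impI)
    fix P' assume h: "consec_pair Z' P' \<and> (Z, lam Z' P') \<in> Dset Z Z'"
    obtain x y where xy: "y < x" "P' = {x,y}" "P' \<subseteq> sym_I Z'"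
      "(x \<in> set (fst Z') \<and> x \<notin> set (snd Z') \<and> y \<in> set (snd Z') \<and> y \<notin> set (fst Z')) \<or>
       (x \<in> set (snd Z') \<and> x \<notin> set (fst Z') \<and> y \<in> set (fst Z') \<and> y \<notin> set (snd Z'))"
      "\<forall>v\<in>set (fst Z') \<union> set (snd Z'). \<not>(y<v \<and> v<x)"
      using consec_xy[OF iZ'] h by blast
    have ZS: "Z \<in> Sbar Z" and BP: "Bplus Z Z' Z (lam Z' P')"
      using h unfolding Dset_def S_def_set_def by auto
    have "Rel R (set (fst Z)) (set (snd Z)) (set (fst (lam Z' P'))) (set (snd (lam Z' P')))"
      using BI[OF ZS lam_in_Sbar[OF xy(3)]] BP by blast
    then have rel0: "Rel R (set (fst Z)) (set (snd Z)) ((set (fst Z') - {x,y}) \<union> (set (snd Z') \<inter> {x,y}))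
        ((set (snd Z') - {x,y}) \<union> (set (fst Z') \<inter> {x,y}))"
      unfolding lam_sets xy(2) .
    have eqR0: "\<forall>v\<in>set (fst Z) \<union> set (snd Z). R x v \<longleftrightarrow> R y v"
      by (rule Gi[OF iZ iZ' mono anti xy(1) xy(4) xy(5) rel0])
    have claim: "\<And>N. N \<subseteq> sym_I Z' \<Longrightarrow> Bplus Z Z' (lam Z M) (lam Z' N) \<Longrightarrow>
                 Bplus Z Z' (lam Z M) (lam Z' ((N \<union> P') - (N \<inter> P')))"
    proof -
      fix N assume N: "N \<subseteq> sym_I Z'" and B: "Bplus Z Z' (lam Z M) (lam Z' N)"
      have N': "(N \<union> P') - (N \<inter> P') \<subseteq> sym_I Z'" using symdiff_sub[OF N xy(3)] .
      let ?A = "set (fst (lam Z M))" and ?B = "set (snd (lam Z M))"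
      let ?C = "set (fst (lam Z' N))" and ?D = "set (snd (lam Z' N))"
      have b: "defect (lam Z' N) = 1 - defect (lam Z M)" "Rel R ?A ?B ?C ?D"
        using BI[OF lam_in_Sbar[OF assms(5)] lam_in_Sbar[OF N]] B by auto
      have xyin: "x \<in> sym_I Z'" "y \<in> sym_I Z'" using xy(2,3) by auto
      have T: "Rel R ?A ?B ((?C - {x,y}) \<union> (?D \<inter> {x,y})) ((?D - {x,y}) \<union> (?C \<inter> {x,y})) \<and>
         card ((?C - {x,y}) \<union> (?D \<inter> {x,y})) = card ?C \<and> card ((?D - {x,y}) \<union> (?C \<inter> {x,y})) = card ?D"
      proof (rule T1dir)
        show "finite ?A" "finite ?B" "finite ?C" "finite ?D" by auto
        show "y < x" by (rule xy(1))
        show "x \<in> ?C \<union> ?D" "y \<in> ?C \<union> ?D" unfolding lam_union using xy(4) by auto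
        show "x \<notin> ?C \<inter> ?D" "y \<notin> ?C \<inter> ?D" using lam_symI[OF N] xyin by auto
        show "\<forall>v\<in>?C \<union> ?D. \<not>(y<v \<and> v<x)" unfolding lam_union by (rule xy(5))
        show "\<forall>v\<in>?A \<union> ?B. R x v \<longleftrightarrow> R y v" unfolding lam_union by (rule eqR0)
        show "Rel R ?A ?B ?C ?D" by (rule b(2))
      qed
      have ts: "set (fst (lam Z' ((N \<union> P') - (N \<inter> P')))) = (?C - {x,y}) \<union> (?D \<inter> {x,y})"
               "set (snd (lam Z' ((N \<union> P') - (N \<inter> P')))) = (?D - {x,y}) \<union> (?C \<inter> {x,y})"
        using lam_toggle_sets[OF N xy(3)] xy(2) by auto
      have "defect (lam Z' ((N \<union> P') - (N \<inter> P'))) = defect (lam Z' N)"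
        unfolding lam_defect[of Z'] using ts T by simp
      then show "Bplus Z Z' (lam Z M) (lam Z' ((N \<union> P') - (N \<inter> P')))"
        using BI[OF lam_in_Sbar[OF assms(5)] lam_in_Sbar[OF N']] b T ts by simp
    qed
    have N': "(N \<union> P') - (N \<inter> P') \<subseteq> sym_I Z'" using symdiff_sub[OF assms(6) xy(3)] .
    show "Bplus Z Z' (lam Z M) (lam Z' N) \<longleftrightarrow> Bplus Z Z' (lam Z M) (lam Z' ((N \<union> P') - (N \<inter> P')))"
      using claim[OF assms(6)] claim[OF N'] symdiff_twice[of N P'] by metis
  qed
  have part2: "\<forall>P. consec_pair Z P \<and> (lam Z P, Z') \<in> Dset Z Z' \<longrightarrow>
            (Bplus Z Z' (lam Z M) (lam Z' N) \<longleftrightarrow>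
             Bplus Z Z' (lam Z ((M \<union> P) - (M \<inter> P))) (lam Z' N))"
  proof (intro allI impI)
    fix P assume h: "consec_pair Z P \<and> (lam Z P, Z') \<in> Dset Z Z'"
    obtain x y where xy: "y < x" "P = {x,y}" "P \<subseteq> sym_I Z"
      "(x \<in> set (fst Z) \<and> x \<notin> set (snd Z) \<and> y \<in> set (snd Z) \<and> y \<notin> set (fst Z)) \<or>
       (x \<in> set (snd Z) \<and> x \<notin> set (fst Z) \<and> y \<in> set (fst Z) \<and> y \<notin> set (snd Z))"
      "\<forall>v\<in>set (fst Z) \<union> set (snd Z). \<not>(y<v \<and> v<x)"
      using consec_xy[OF iZ] h by blast
    have ZS: "Z' \<in> Sbar Z'" and BP: "Bplus Z Z' (lam Z P) Z'"
      using h unfolding Dset_def S_def_set_def by auto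
    have bp: "defect Z' = 1 - defect (lam Z P)"
      "Rel R (set (fst (lam Z P))) (set (snd (lam Z P))) (set (fst Z')) (set (snd Z'))"
      using BI[OF lam_in_Sbar[OF xy(3)] ZS] BP by auto
    then have rel0: "Rel R ((set (fst Z) - {x,y}) \<union> (set (snd Z) \<inter> {x,y}))
        ((set (snd Z) - {x,y}) \<union> (set (fst Z) \<inter> {x,y})) (set (fst Z')) (set (snd Z'))"
      unfolding lam_sets xy(2) by simp
    have dZ': "defect Z' = int (card (set (fst Z'))) - int (card (set (snd Z')))"
      unfolding defect_def using distZ by simp
    have sz0: "card (set (fst Z')) = card (set (snd (lam Z P))) + e \<and>
               card (set (snd Z')) + 1 = card (set (fst (lam Z P))) + e"
      apply (rule size_arith[where m = "length (snd Z)"])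
      using lam_card[OF xy(3)] lenZ lenZ' distZ bp(1) dZ' lam_defect by auto
    have sz: "card (set (fst Z')) = card ((set (snd Z) - {x,y}) \<union> (set (fst Z) \<inter> {x,y})) + e"
             "card (set (snd Z')) + 1 = card ((set (fst Z) - {x,y}) \<union> (set (snd Z) \<inter> {x,y})) + e"
      using sz0 unfolding lam_sets xy(2) by auto
    have eqZ0: "\<forall>z\<in>set (fst Z') \<union> set (snd Z'). R z x \<longleftrightarrow> R z y"
      by (rule Gii[OF iZ iZ' mono anti xy(1) xy(4) xy(5) rel0 sz])
    have claim: "\<And>M. M \<subseteq> sym_I Z \<Longrightarrow> Bplus Z Z' (lam Z M) (lam Z' N) \<Longrightarrow>
                 Bplus Z Z' (lam Z ((M \<union> P) - (M \<inter> P))) (lam Z' N)"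
    proof -
      fix M assume M: "M \<subseteq> sym_I Z" and B: "Bplus Z Z' (lam Z M) (lam Z' N)"
      have M': "(M \<union> P) - (M \<inter> P) \<subseteq> sym_I Z" using symdiff_sub[OF M xy(3)] .
      let ?A = "set (fst (lam Z M))" and ?B = "set (snd (lam Z M))"
      let ?C = "set (fst (lam Z' N))" and ?D = "set (snd (lam Z' N))"
      have b: "defect (lam Z' N) = 1 - defect (lam Z M)" "Rel R ?A ?B ?C ?D"
        using BI[OF lam_in_Sbar[OF M] lam_in_Sbar[OF assms(6)]] B by auto
      have s: "card ?C = card ?B + e" "card ?D + 1 = card ?A + e"
        using sizes[OF M assms(6) b(1)] by auto
      have xyin: "x \<in> sym_I Z" "y \<in> sym_I Z" using xy(2,3) by auto
      have T: "Rel R ((?A - {x,y}) \<union> (?B \<inter> {x,y})) ((?B - {x,y}) \<union> (?A \<inter> {x,y})) ?C ?D \<and>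
         card ((?A - {x,y}) \<union> (?B \<inter> {x,y})) = card ?A \<and> card ((?B - {x,y}) \<union> (?A \<inter> {x,y})) = card ?B"
      proof (rule T2dir)
        show "finite ?A" "finite ?B" "finite ?C" "finite ?D" by auto
        show "y < x" by (rule xy(1))
        show "x \<in> ?A \<union> ?B" "y \<in> ?A \<union> ?B" unfolding lam_union using xy(4) by auto
        show "x \<notin> ?A \<inter> ?B" "y \<notin> ?A \<inter> ?B" using lam_symI[OF M] xyin by auto
        show "\<forall>z v w. R z v \<longrightarrow> v \<le> w \<longrightarrow> R z w" by (rule mono)
        show "\<forall>z\<in>?C \<union> ?D. R z x \<longleftrightarrow> R z y" unfolding lam_union by (rule eqZ0)
        show "card ?C = card ?B + e" "card ?D + 1 = card ?A + e" by (rule s(1), rule s(2))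
        show "Rel R ?A ?B ?C ?D" by (rule b(2))
      qed
      have ts: "set (fst (lam Z ((M \<union> P) - (M \<inter> P)))) = (?A - {x,y}) \<union> (?B \<inter> {x,y})"
               "set (snd (lam Z ((M \<union> P) - (M \<inter> P)))) = (?B - {x,y}) \<union> (?A \<inter> {x,y})"
        using lam_toggle_sets[OF M xy(3)] xy(2) by auto
      have "defect (lam Z ((M \<union> P) - (M \<inter> P))) = defect (lam Z M)"
        unfolding lam_defect[of Z] using ts T by simp
      then show "Bplus Z Z' (lam Z ((M \<union> P) - (M \<inter> P))) (lam Z' N)"
        using BI[OF lam_in_Sbar[OF M'] lam_in_Sbar[OF assms(6)]] b T ts by simp
    qed
    have M': "(M \<union> P) - (M \<inter> P) \<subseteq> sym_I Z" using symdiff_sub[OF assms(5) xy(3)] .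
    show "Bplus Z Z' (lam Z M) (lam Z' N) \<longleftrightarrow> Bplus Z Z' (lam Z ((M \<union> P) - (M \<inter> P))) (lam Z' N)"
      using claim[OF assms(5)] claim[OF M'] symdiff_twice[of M P] by metis
  qed
  show ?thesis using part1 part2 by blast
qed

end
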